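(* Let $0<\gamma<1$, integers $n\ge p\ge2$, and $\beta_{\gamma,p}:=\min\left\{\frac{1-\gamma}{2p}\log\bigl(\frac{2p}{p+1}\bigr),\ \frac{1-\gamma}{8p^\gamma(p-1)^{1-\gamma}}\right\}$. Then $$\|C_\gamma^{(p)}\|_{1\to1}\le1+\frac{1}{\Gamma(\gamma)}H_{p-1}^{(1-\gamma)}+\frac{1}{\Gamma(\gamma)\,p^{1-\gamma}\,\beta_{\gamma,p}},$$ where $H_m^{(s)}:=\sum_{j=1}^m j^{-s}$. Moreover there is an absolute constant $K$ (independent of $n,p,\gamma$) with $\|C_\gamma^{(p)}\|_{1\to1}\le K\,\frac{p^\gamma}{\gamma(1-\gamma)}$.
   Context: $\log$ is the natural logarithm and $\Gamma$ the Gamma function. $(\tilde c_\gamma)_i:=(-1)^i\binom{\gamma}{i}$ with $\binom{\gamma}{i}=\prod_{j=1}^{i}\frac{\gamma+1-j}{j}$. $C_\gamma^{(p)}$ is the inverse of the $n\times n$ lower-triangular Toeplitz matrix whose $r$-th subdiagonal ($r=0$ the main diagonal) equals $(\tilde c_\gamma)_r$ for $r\le p-1$ and $0$ for $r\ge p$. For a matrix $M$, $\|M\|_{1\to1}$ is the maximum $\ell_1$ norm of a column of $M$. *)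

theory Defs
  imports "HOL-Analysis.Gamma_Function" "Jordan_Normal_Form.Matrix"
begin

text \<open>Coefficients (c~_gamma)_i = (-1)^i binom(gamma, i), with the generalized binomial
  coefficient binom(gamma,i) = prod_{j=1}^i (gamma+1-j)/j.\<close>
definition ctilde :: "real \<Rightarrow> nat \<Rightarrow> real" where
  "ctilde \<gamma> i = (-1) ^ i * (\<Prod>j = 1..i. (\<gamma> + 1 - real j) / real j)"

definition toep_band :: "real \<Rightarrow> nat \<Rightarrow> nat \<Rightarrow> real mat" where
  "toep_band \<gamma> p n = mat n n (\<lambda>(i, j). if j \<le> i \<and> i - j \<le> p - 1 then ctilde \<gamma> (i - j) else 0)"

definition C_mat :: "real \<Rightarrow> nat \<Rightarrow> nat \<Rightarrow> real mat" where
  "C_mat \<gamma> p n = (THE B. B \<in> carrier_mat n n \<and> toep_band \<gamma> p n * B = 1\<^sub>m n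
                         \<and> B * toep_band \<gamma> p n = 1\<^sub>m n)"

definition norm_1_1 :: "real mat \<Rightarrow> real" where
  "norm_1_1 M = Max ((\<lambda>j. \<Sum>i<dim_row M. \<bar>M $$ (i, j)\<bar>) ` {..<dim_col M})"

definition gen_harmonic :: "nat \<Rightarrow> real \<Rightarrow> real" where
  "gen_harmonic m s = (\<Sum>j = 1..m. real j powr (- s))"

definition beta_gp :: "real \<Rightarrow> nat \<Rightarrow> real" where
  "beta_gp \<gamma> p = min ((1 - \<gamma>) / (2 * real p) * ln (2 * real p / (real p + 1)))
                      ((1 - \<gamma>) / (8 * real p powr \<gamma> * (real p - 1) powr (1 - \<gamma>)))"

end

theory Submission
  imports Defs
begin


lemma ctilde_0[simp]: "ctilde g 0 = 1" by (simp add: ctilde_def)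

lemma ctilde_step: "ctilde g (Suc r) = ctilde g r * ((real r - g) / (real r + 1))"
proof -
  have "(\<Prod>j = 1..Suc r. (g + 1 - real j) / real j) = (\<Prod>j = 1..r. (g + 1 - real j) / real j) * ((g - real r) / (real r + 1))"
    by (simp add: atLeastAtMostSuc_conv mult.commute)
  then show ?thesis unfolding ctilde_def by (simp add: field_simps)
qed

definition Pm :: "real \<Rightarrow> nat \<Rightarrow> real" where
  "Pm g m = (\<Prod>j = 1..m. (real j - g) / real j)"

lemma Pm_Suc: "Pm g (Suc m) = Pm g m * ((real m + 1 - g) / (real m + 1))"
  unfolding Pm_def by (simp add: atLeastAtMostSuc_conv mult.commute add.commute)

lemma Pm_pos: "g < 1 \<Longrightarrow> Pm g m > 0"
  unfolding Pm_def by (rule prod_pos) auto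

lemma ctilde_Suc: "ctilde g (Suc m) = - g / (real m + 1) * Pm g m"
proof (induction m)
  case 0 then show ?case by (simp add: ctilde_def Pm_def)
next
  case (Suc m)
  show ?case unfolding ctilde_step[of g "Suc m"] Suc Pm_Suc by (simp add: field_simps)
qed

lemma ctilde_neg: "0 < g \<Longrightarrow> g < 1 \<Longrightarrow> r \<ge> 1 \<Longrightarrow> ctilde g r < 0"
  using Pm_pos[of g "r - 1"] ctilde_Suc[of g "r - 1"]
  by (cases r) (auto intro!: mult_neg_pos simp: divide_neg_pos)

lemma sum_ctilde: "(\<Sum>r = 1..m. ctilde g r) = Pm g m - 1"
proof (induction m)
  case 0 then show ?case by (simp add: Pm_def)
next
  case (Suc m)
  have "(\<Sum>r = 1..Suc m. ctilde g r) = (\<Sum>r = 1..m. ctilde g r) + ctilde g (Suc m)"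
    by (simp add: atLeastAtMostSuc_conv)
  moreover have "Pm g m * ((real m + 1 - g) / (real m + 1)) - 1 = Pm g m - 1 + - g / (real m + 1) * Pm g m"
    by (simp add: field_simps)
  ultimately show ?case using Suc unfolding ctilde_Suc Pm_Suc by linarith
qed

lemma bern: "0 \<le> x \<Longrightarrow> 0 \<le> t \<Longrightarrow> t \<le> 1 \<Longrightarrow> (1 + x) powr t \<le> 1 + t * (x::real)"
  using Youngs_inequality_0[of t "1 - t" "1 + x" 1] by (simp add: algebra_simps)

lemma Pm_lower: assumes "0 < g" "g < 1" "m \<ge> 1" shows "Pm g m * real m powr g \<ge> 1 - g"
  using assms(3)
proof (induction m rule: dec_induct)
  case base then show ?case by (simp add: Pm_def)
next
  case (step m)
  have m0: "real m > 0" using step by auto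
  have b: "(1 + 1 / real m) powr (1 - g) \<le> 1 + (1 - g) * (1 / real m)"
    using step assms by (intro bern) auto
  have e1: "1 + 1 / real m = (real m + 1) / real m" using m0 by (simp add: field_simps)
  have "(real m + 1) powr (1 - g) \<le> real m powr (1-g) * ((real m + 1 - g) / real m)"
    using b m0 unfolding e1 by (simp add: powr_divide field_simps)
  then have "(real m + 1) powr (1 - g) * real m \<le> real m powr (1-g) * (real m + 1 - g)"
    using m0 by (simp add: field_simps)
  then have "(real m + 1) powr (1 - g) * real m * (real m + 1) powr g \<le> real m powr (1-g) * (real m + 1 - g) * (real m + 1) powr g"
    by (rule mult_right_mono) simp
  moreover have "(real m + 1) powr (1 - g) * (real m + 1) powr g = real m + 1"
    by (simp add: powr_add[symmetric])
  moreover have "real m powr (1-g) = real m / real m powr g"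
    using m0 by (simp add: powr_diff)
  ultimately have h1: "(real m + 1) * real m \<le> real m / real m powr g * (real m + 1 - g) * (real m + 1) powr g"
    by (simp add: algebra_simps)
  have "real m * ((real m + 1) * real m powr g) \<le> real m * ((real m + 1 - g) * (real m + 1) powr g)"
  proof -
    have "real m * ((real m + 1) * real m powr g) = ((real m + 1) * real m) * real m powr g" by simp
    also have "\<dots> \<le> (real m / real m powr g * (real m + 1 - g) * (real m + 1) powr g) * real m powr g"
      using h1 by (rule mult_right_mono) simp
    also have "\<dots> = real m * ((real m + 1 - g) * (real m + 1) powr g)" using m0 by simp
    finally show ?thesis .
  qed
  then have key: "(real m + 1) * real m powr g \<le> (real m + 1 - g) * (real m + 1) powr g"
    using m0 by (rule mult_left_le_imp_le)
  have "Pm g (Suc m) * real (Suc m) powr g = Pm g m * ((real m + 1 - g) * (real m + 1) powr g) / (real m + 1)"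
    unfolding Pm_Suc by (simp add: add.commute)
  also have "\<dots> \<ge> Pm g m * ((real m + 1) * real m powr g) / (real m + 1)"
    using key Pm_pos[of g m] step assms by (intro divide_right_mono mult_left_mono) auto
  also have "Pm g m * ((real m + 1) * real m powr g) / (real m + 1) = Pm g m * real m powr g"
    by simp
  finally show ?case using step by simp
qed

lemma harm_lower: "0 < g \<Longrightarrow> g < 1 \<Longrightarrow> g * (\<Sum>j = 1..m. real j powr (g - 1)) \<ge> (real m + 1) powr g - 1"
proof (induction m)
  case 0 then show ?case by simp
next
  case (Suc m)
  have m0: "real m + 1 > 0" by simp
  have b: "(1 + 1 / (real m + 1)) powr g \<le> 1 + g * (1 / (real m + 1))"
    using Suc by (intro bern) auto
  have e1: "1 + 1 / (real m + 1) = (real m + 2) / (real m + 1)" using m0 by (simp add: field_simps)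
  have "(real m + 2) powr g \<le> (real m + 1) powr g * (1 + g / (real m + 1))"
    using b m0 unfolding e1 by (simp add: powr_divide field_simps)
  also have "\<dots> = (real m + 1) powr g + g * (real m + 1) powr (g - 1)"
    using m0 by (simp add: powr_diff field_simps)
  finally have k: "(real m + 2) powr g \<le> (real m + 1) powr g + g * (real m + 1) powr (g - 1)" .
  have "g * (\<Sum>j = 1..Suc m. real j powr (g - 1)) = g * (\<Sum>j = 1..m. real j powr (g - 1)) + g * (real m + 1) powr (g - 1)"
    by (simp add: atLeastAtMostSuc_conv distrib_left add.commute)
  then show ?case using Suc k by (simp add: add.commute)
qed

lemma Gamma_bound: "0 < (g::real) \<Longrightarrow> g < 1 \<Longrightarrow> Gamma g \<le> 1 / g"
proof -
  assume g: "0 < g" "g < 1"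
  have "(ln \<circ> Gamma) ((1 - g) *\<^sub>R 1 + g *\<^sub>R 2) \<le> (1 - g) * (ln \<circ> Gamma) 1 + g * (ln \<circ> Gamma) (2::real)"
    using g by (intro convex_onD[OF log_convex_Gamma_real]) auto
  moreover have "Gamma (2::real) = 1" using Gamma_fact[of 1] by simp
  ultimately have "ln (Gamma (1 + g)) \<le> 0" by (simp add: algebra_simps)
  then have "Gamma (g + 1) \<le> 1" using g by (simp add: add.commute)
  moreover have "Gamma (g + 1) = g * Gamma g" using g by (intro Gamma_plus1) (auto elim!: nonpos_Ints_cases)
  ultimately show ?thesis using g by (simp add: field_simps)
qed



fun dd :: "real \<Rightarrow> nat \<Rightarrow> nat \<Rightarrow> real" where
  "dd g p k = (if k = 0 then 1 else - (\<Sum>r\<in>{1..min k (p-1)}. ctilde g r * dd g p (k - r)))"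
declare dd.simps[simp del]

lemma dd_0[simp]: "dd g p 0 = 1" by (subst dd.simps) simp

lemma dd_pos: "k \<noteq> 0 \<Longrightarrow> dd g p k = - (\<Sum>r\<in>{1..min k (p-1)}. ctilde g r * dd g p (k - r))"
  by (subst dd.simps) simp

lemma conv: "(\<Sum>s=0..k. (if s \<le> p-1 then ctilde g s else 0) * dd g p (k-s)) = (if k=0 then 1 else 0)"
proof (cases "k = 0")
  case True then show ?thesis by simp
next
  case False
  have "(\<Sum>s=0..k. (if s \<le> p-1 then ctilde g s else 0) * dd g p (k-s))
      = dd g p k + (\<Sum>s=Suc 0..k. (if s \<le> p-1 then ctilde g s else 0) * dd g p (k-s))"
    by (subst sum.atLeast_Suc_atMost) auto
  also have "(\<Sum>s=Suc 0..k. (if s \<le> p-1 then ctilde g s else 0) * dd g p (k-s))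
      = (\<Sum>r\<in>{1..min k (p-1)}. ctilde g r * dd g p (k - r))"
    by (rule sum.mono_neutral_cong_right) auto
  also have "dd g p k = - (\<Sum>r\<in>{1..min k (p-1)}. ctilde g r * dd g p (k - r))"
    using False by (rule dd_pos)
  finally show ?thesis using False by simp
qed

lemma dd_nonneg: assumes "0 < g" "g < 1" shows "dd g p k \<ge> 0"
proof (induction k rule: less_induct)
  case (less k)
  show ?case
  proof (cases "k = 0")
    case False
    have "dd g p k = (\<Sum>r\<in>{1..min k (p-1)}. (- ctilde g r) * dd g p (k - r))"
      using False by (simp add: dd_pos[OF False] sum_negf)
    also have "\<dots> \<ge> 0"
      using less False ctilde_neg[OF assms] by (intro sum_nonneg mult_nonneg_nonneg) (auto simp: less_imp_le)
    finally show ?thesis .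
  qed simp
qed

lemma sum_rev_ij: "(j::nat) \<le> i \<Longrightarrow> (\<Sum>l=j..i. F l) = (\<Sum>s=0..i-j. F (i - s))"
  by (rule sum.reindex_bij_witness[of _ "\<lambda>s. i - s" "\<lambda>l. i - l"]) auto

lemma sum_shift_ij: "(j::nat) \<le> i \<Longrightarrow> (\<Sum>l=j..i. F l) = (\<Sum>s=0..i-j. F (j + s))"
  by (rule sum.reindex_bij_witness[of _ "\<lambda>s. j + s" "\<lambda>l. l - j"]) auto

definition Bm :: "real \<Rightarrow> nat \<Rightarrow> nat \<Rightarrow> real mat" where
  "Bm g p n = mat n n (\<lambda>(i, j). if j \<le> i then dd g p (i - j) else 0)"

lemma TB_entry: assumes "i < n" "j < n"
  shows "(\<Sum>l\<in>{0..<n}. (if l \<le> i \<and> i - l \<le> p-1 then ctilde g (i-l) else 0) * (if j \<le> l then dd g p (l-j) else 0))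
    = (if i = j then 1 else 0)"
proof (cases "j \<le> i")
  case False then show ?thesis by (intro trans[OF sum.neutral]) auto
next
  case True
  have "(\<Sum>l\<in>{0..<n}. (if l \<le> i \<and> i - l \<le> p-1 then ctilde g (i-l) else 0) * (if j \<le> l then dd g p (l-j) else 0))
      = (\<Sum>l=j..i. (if i - l \<le> p-1 then ctilde g (i-l) else 0) * dd g p (l-j))"
    using assms by (intro sum.mono_neutral_cong_right) auto
  also have "\<dots> = (\<Sum>s=0..i-j. (if s \<le> p-1 then ctilde g s else 0) * dd g p (i-j-s))"
    using True by (subst sum_rev_ij) (auto intro!: sum.cong simp: add.commute)
  also have "\<dots> = (if i = j then 1 else 0)" using True by (subst conv) auto
  finally show ?thesis .
qed

lemma BT_entry: assumes "i < n" "j < n"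
  shows "(\<Sum>l\<in>{0..<n}. (if l \<le> i then dd g p (i-l) else 0) * (if j \<le> l \<and> l - j \<le> p-1 then ctilde g (l-j) else 0))
    = (if i = j then 1 else 0)"
proof (cases "j \<le> i")
  case False then show ?thesis by (intro trans[OF sum.neutral]) auto
next
  case True
  have "(\<Sum>l\<in>{0..<n}. (if l \<le> i then dd g p (i-l) else 0) * (if j \<le> l \<and> l - j \<le> p-1 then ctilde g (l-j) else 0))
      = (\<Sum>l=j..i. dd g p (i-l) * (if l - j \<le> p-1 then ctilde g (l-j) else 0))"
    using assms by (intro sum.mono_neutral_cong_right) auto
  also have "\<dots> = (\<Sum>s=0..i-j. (if s \<le> p-1 then ctilde g s else 0) * dd g p (i-j-s))"
    using True by (subst sum_shift_ij) (auto intro!: sum.cong simp: add.commute)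
  also have "\<dots> = (if i = j then 1 else 0)" using True by (subst conv) auto
  finally show ?thesis .
qed

lemma T_idx: "i < n \<Longrightarrow> l < n \<Longrightarrow> toep_band g p n $$ (i,l) = (if l \<le> i \<and> i - l \<le> p-1 then ctilde g (i-l) else 0)"
  by (simp add: toep_band_def)
lemma B_idx: "i < n \<Longrightarrow> l < n \<Longrightarrow> Bm g p n $$ (i,l) = (if l \<le> i then dd g p (i-l) else 0)"
  by (simp add: Bm_def)
lemma T_dim[simp]: "dim_row (toep_band g p n) = n" "dim_col (toep_band g p n) = n"
  by (simp_all add: toep_band_def)
lemma B_dim[simp]: "dim_row (Bm g p n) = n" "dim_col (Bm g p n) = n"
  by (simp_all add: Bm_def)

lemma TB: "toep_band g p n * Bm g p n = 1\<^sub>m n"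
proof (rule eq_matI)
  fix i j assume "i < dim_row (1\<^sub>m n)" "j < dim_col (1\<^sub>m n)"
  then have ij: "i < n" "j < n" by auto
  have "(toep_band g p n * Bm g p n) $$ (i, j) = row (toep_band g p n) i \<bullet> col (Bm g p n) j"
    using ij by simp
  also have "\<dots> = (\<Sum>l\<in>{0..<n}. toep_band g p n $$ (i,l) * Bm g p n $$ (l,j))"
    unfolding scalar_prod_def using ij by (intro sum.cong) auto
  also have "\<dots> = (\<Sum>l\<in>{0..<n}. (if l \<le> i \<and> i - l \<le> p-1 then ctilde g (i-l) else 0) * (if j \<le> l then dd g p (l-j) else 0))"
    using ij by (intro sum.cong) (auto simp only: T_idx B_idx atLeastLessThan_iff)
  also have "\<dots> = 1\<^sub>m n $$ (i, j)" using ij TB_entry[OF ij, of p g] by simp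
  finally show "(toep_band g p n * Bm g p n) $$ (i, j) = 1\<^sub>m n $$ (i, j)" .
qed auto

lemma BT: "Bm g p n * toep_band g p n = 1\<^sub>m n"
proof (rule eq_matI)
  fix i j assume "i < dim_row (1\<^sub>m n)" "j < dim_col (1\<^sub>m n)"
  then have ij: "i < n" "j < n" by auto
  have "(Bm g p n * toep_band g p n) $$ (i, j) = row (Bm g p n) i \<bullet> col (toep_band g p n) j"
    using ij by simp
  also have "\<dots> = (\<Sum>l\<in>{0..<n}. Bm g p n $$ (i,l) * toep_band g p n $$ (l,j))"
    unfolding scalar_prod_def using ij by (intro sum.cong) auto
  also have "\<dots> = (\<Sum>l\<in>{0..<n}. (if l \<le> i then dd g p (i-l) else 0) * (if j \<le> l \<and> l - j \<le> p-1 then ctilde g (l-j) else 0))"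
    using ij by (intro sum.cong) (auto simp only: T_idx B_idx atLeastLessThan_iff)
  also have "\<dots> = 1\<^sub>m n $$ (i, j)" using ij BT_entry[OF ij, of g p] by simp
  finally show "(Bm g p n * toep_band g p n) $$ (i, j) = 1\<^sub>m n $$ (i, j)" .
qed auto

lemma C_eq: "C_mat g p n = Bm g p n"
  unfolding C_mat_def
proof (rule the_equality)
  show "Bm g p n \<in> carrier_mat n n \<and> toep_band g p n * Bm g p n = 1\<^sub>m n \<and> Bm g p n * toep_band g p n = 1\<^sub>m n"
    using TB BT by (intro conjI) (simp only: carrier_mat_def mem_Collect_eq B_dim, simp, simp)
next
  fix B' assume h: "B' \<in> carrier_mat n n \<and> toep_band g p n * B' = 1\<^sub>m n \<and> B' * toep_band g p n = 1\<^sub>m n"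
  have c: "Bm g p n \<in> carrier_mat n n" "toep_band g p n \<in> carrier_mat n n"
    unfolding carrier_mat_def mem_Collect_eq B_dim T_dim by simp_all
  have hc: "B' \<in> carrier_mat n n" and hTB: "toep_band g p n * B' = 1\<^sub>m n" using h by blast+
  have e1: "(Bm g p n * toep_band g p n) * B' = B'"
    unfolding BT by (rule left_mult_one_mat[OF hc])
  have e2: "(Bm g p n * toep_band g p n) * B' = Bm g p n * (toep_band g p n * B')"
    by (rule assoc_mult_mat[OF c(1) c(2) hc])
  have e3: "Bm g p n * (toep_band g p n * B') = Bm g p n"
    unfolding hTB by (rule right_mult_one_mat[OF c(1)])
  from e1 e2 e3 show "B' = Bm g p n" by simp
qed



lemma shiftsum: "r \<ge> 1 \<Longrightarrow> (\<Sum>k=1..M. if r \<le> k then dd g p (k-r) else 0) = (\<Sum>i<Suc M - r. dd g p i)"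
proof (induction M)
  case 0 then show ?case by simp
next
  case (Suc M)
  have "(\<Sum>k=1..Suc M. if r \<le> k then dd g p (k-r) else 0) = (\<Sum>k=1..M. if r \<le> k then dd g p (k-r) else 0) + (if r \<le> Suc M then dd g p (Suc M - r) else 0)"
    by (simp add: atLeastAtMostSuc_conv)
  also have "\<dots> = (\<Sum>i<Suc M - r. dd g p i) + (if r \<le> Suc M then dd g p (Suc M - r) else 0)"
    using Suc by simp
  also have "\<dots> = (\<Sum>i<Suc (Suc M) - r. dd g p i)"
  proof (cases "r \<le> Suc M")
    case True
    then have "Suc (Suc M) - r = Suc (Suc M - r)" by simp
    then show ?thesis using True Suc.prems by simp
  next
    case False
    then show ?thesis by simp
  qed
  finally show ?case .
qed

lemma swap_sum: "(\<Sum>k=1..M. dd g p k) = (\<Sum>r=1..p-1. (- ctilde g r) * (\<Sum>i<Suc M - r. dd g p i))"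
proof -
  have "(\<Sum>k=1..M. dd g p k) = (\<Sum>k=1..M. \<Sum>r\<in>{1..min k (p-1)}. (- ctilde g r) * dd g p (k - r))"
    by (intro sum.cong) (auto simp: dd_pos sum_negf)
  also have "\<dots> = (\<Sum>k=1..M. \<Sum>r=1..p-1. (if r \<le> k then (- ctilde g r) * dd g p (k - r) else 0))"
    by (intro sum.cong refl sum.mono_neutral_cong_left) auto
  also have "\<dots> = (\<Sum>r=1..p-1. \<Sum>k=1..M. (if r \<le> k then (- ctilde g r) * dd g p (k - r) else 0))"
    by (rule sum.swap)
  also have "\<dots> = (\<Sum>r=1..p-1. (- ctilde g r) * (\<Sum>k=1..M. if r \<le> k then dd g p (k-r) else 0))"
    by (intro sum.cong refl) (auto simp: sum_distrib_left intro!: sum.cong)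
  also have "\<dots> = (\<Sum>r=1..p-1. (- ctilde g r) * (\<Sum>i<Suc M - r. dd g p i))"
    by (intro sum.cong refl) (subst shiftsum, auto)
  finally show ?thesis .
qed

lemma sum_split0: "(\<Sum>k<Suc M. f k) = f 0 + (\<Sum>k=1..M. (f k::real))"
  by (induction M) (auto simp: atLeastAtMostSuc_conv)

lemma Dbound: assumes g: "0 < g" "g < 1" and p: "p \<ge> 2"
  shows "(\<Sum>k<N. dd g p k) \<le> 1 / Pm g (p-1)"
proof (induction N rule: less_induct)
  case (less N)
  have P: "Pm g (p-1) > 0" using Pm_pos g by auto
  show ?case
  proof (cases N)
    case 0 then show ?thesis using P by simp
  next
    case (Suc M)
    have "(\<Sum>k<N. dd g p k) = 1 + (\<Sum>r=1..p-1. (- ctilde g r) * (\<Sum>i<Suc M - r. dd g p i))"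
      unfolding Suc sum_split0 swap_sum by simp
    also have "\<dots> \<le> 1 + (\<Sum>r=1..p-1. (- ctilde g r) * (1 / Pm g (p-1)))"
      using ctilde_neg[OF g] Suc
      by (intro add_left_mono sum_mono mult_left_mono less) (auto simp: less_imp_le)
    also have "\<dots> = 1 + (- (\<Sum>r=1..p-1. ctilde g r)) / Pm g (p-1)"
      by (simp add: sum_divide_distrib[symmetric] sum_negf)
    also have "\<dots> = 1 + (1 - Pm g (p-1)) / Pm g (p-1)"
      unfolding sum_ctilde by simp
    also have "\<dots> = 1 / Pm g (p-1)" using P by (simp add: field_simps)
    finally show ?thesis .
  qed
qed

lemma norm_bound: assumes g: "0 < g" "g < 1" and p: "p \<ge> 2" "p \<le> n"
  shows "norm_1_1 (C_mat g p n) \<le> 1 / Pm g (p-1)"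
proof -
  have col: "(\<Sum>i<n. \<bar>Bm g p n $$ (i, j)\<bar>) \<le> 1 / Pm g (p-1)" if j: "j < n" for j
  proof -
    have "(\<Sum>i<n. \<bar>Bm g p n $$ (i, j)\<bar>) = (\<Sum>i<n. if j \<le> i then dd g p (i-j) else 0)"
      using j dd_nonneg[OF g] by (intro sum.cong) (auto simp: B_idx)
    also have "\<dots> = (\<Sum>i\<in>{j..<n}. dd g p (i-j))"
      by (rule sum.mono_neutral_cong_right) auto
    also have "\<dots> = (\<Sum>k\<in>{..<n-j}. dd g p k)"
      by (rule sum.reindex_bij_witness[of _ "\<lambda>k. k + j" "\<lambda>i. i - j"]) auto
    also have "\<dots> \<le> (\<Sum>k<n. dd g p k)"
      using dd_nonneg[OF g] by (intro sum_mono2) auto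
    also have "\<dots> \<le> 1 / Pm g (p-1)" by (rule Dbound[OF g p(1)])
    finally show ?thesis .
  qed
  have "0 \<in> {..<n}" using p by simp
  then have ne: "{..<n} \<noteq> {}" by blast
  show ?thesis unfolding C_eq norm_1_1_def B_dim
    using col ne by (subst Max_le_iff) auto
qed



lemma core: assumes g: "0 < g" "g < 1" and p: "p \<ge> 2" "p \<le> n"
  shows "norm_1_1 (C_mat g p n) \<le> real p powr g / (1 - g)"
proof -
  have P: "Pm g (p-1) > 0" using Pm_pos g by auto
  have L: "Pm g (p-1) * real (p-1) powr g \<ge> 1 - g" by (rule Pm_lower[OF g]) (use p in auto)
  have "1 / Pm g (p-1) \<le> real (p-1) powr g / (1 - g)"
    using L P g by (simp add: field_simps)
  also have "\<dots> \<le> real p powr g / (1 - g)"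
    using g p by (intro divide_right_mono powr_mono2) auto
  finally show ?thesis using norm_bound[OF g p] by linarith
qed

lemma rhs: assumes g: "0 < g" "g < 1" and p: "p \<ge> 2"
  shows "real p powr g / (1 - g) \<le> 1 + gen_harmonic (p - 1) (1 - g) / Gamma g
              + 1 / (Gamma g * real p powr (1 - g) * beta_gp g p)"
proof -
  define q where "q = real p powr g"
  define X where "X = real p powr (1 - g)"
  define G where "G = Gamma g"
  define H where "H = gen_harmonic (p - 1) (1 - g)"
  define \<beta> where "\<beta> = beta_gp g p"
  have pp: "real p > 0" using p by simp
  have q0: "q > 0" and X0: "X > 0" unfolding q_def X_def using pp by auto
  have qX: "q * X = real p" unfolding q_def X_def using pp by (simp add: powr_add[symmetric])
  have G0: "G > 0" unfolding G_def using g by simp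
  have G1: "G \<le> 1 / g" unfolding G_def using Gamma_bound g by simp
  have H: "g * H \<ge> q - 1"
  proof -
    have "H = (\<Sum>j = 1..p-1. real j powr (g - 1))" unfolding H_def gen_harmonic_def by simp
    moreover have "real (p-1) + 1 = real p" using p by simp
    ultimately show ?thesis using harm_lower[OF g, of "p-1"] unfolding q_def by simp
  qed
  have H0: "H \<ge> 0" unfolding H_def gen_harmonic_def by (intro sum_nonneg) auto
  have gG: "1 / G \<ge> g" using G0 G1 g by (simp add: field_simps)
  have HG: "H / G \<ge> q - 1"
  proof -
    have "H / G = H * (1 / G)" by simp
    also have "\<dots> \<ge> H * g" using gG H0 by (intro mult_left_mono) auto
    finally show ?thesis using H by (simp add: mult.commute)
  qed
  have ln1: "ln (2 * real p / (real p + 1)) > 0" using p by simp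
  have ln2: "ln (2 * real p / (real p + 1)) \<le> 1"
  proof -
    have "ln (2 * real p / (real p + 1)) \<le> 2 * real p / (real p + 1) - 1"
      using pp by (intro ln_le_minus_one) auto
    also have "\<dots> \<le> 1" using pp by (simp add: field_simps)
    finally show ?thesis .
  qed
  have b1: "(1 - g) / (2 * real p) * ln (2 * real p / (real p + 1)) > 0"
    using g pp ln1 by simp
  have b2: "(1 - g) / (8 * real p powr g * (real p - 1) powr (1 - g)) > 0"
    using g p by simp
  have B0: "\<beta> > 0" unfolding \<beta>_def beta_gp_def using b1 b2 by simp
  have B1: "\<beta> \<le> (1 - g) / (2 * real p)"
  proof -
    have "\<beta> \<le> (1 - g) / (2 * real p) * ln (2 * real p / (real p + 1))"
      unfolding \<beta>_def beta_gp_def by simp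
    also have "\<dots> \<le> (1 - g) / (2 * real p) * 1"
      using ln2 g pp by (intro mult_left_mono) auto
    finally show ?thesis by simp
  qed
  have den: "G * X * \<beta> \<le> (1 / g) * X * ((1 - g) / (2 * real p))"
    using G1 B1 G0 X0 B0 g by (intro mult_mono) auto
  have den0: "G * X * \<beta> > 0" using G0 X0 B0 by simp
  have T3: "1 / (G * X * \<beta>) \<ge> 1 / ((1 / g) * X * ((1 - g) / (2 * real p)))"
    using den den0 g G0 X0 B0 pp by (intro divide_left_mono mult_pos_pos) auto
  have eq3: "1 / ((1 / g) * X * ((1 - g) / (2 * real p))) = 2 * g * q / (1 - g)"
    using g X0 q0 qX[symmetric] by (simp add: field_simps)
  have fin: "q / (1 - g) \<le> 1 + (q - 1) + 2 * g * q / (1 - g)"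
  proof -
    have "q / (1 - g) = q + g * q / (1 - g)" using g by (simp add: field_simps)
    moreover have "g * q / (1 - g) \<le> 2 * g * q / (1 - g)" using g q0 by (intro divide_right_mono) auto
    ultimately show ?thesis by simp
  qed
  show ?thesis
    using fin HG T3 eq3 unfolding q_def[symmetric] X_def[symmetric] G_def[symmetric] H_def[symmetric] \<beta>_def[symmetric]
    by linarith
qed

theorem mainTheorem9:
  shows "(\<forall>(\<gamma>::real) (n::nat) (p::nat). 0 < \<gamma> \<and> \<gamma> < 1 \<and> 2 \<le> p \<and> p \<le> n \<longrightarrow>
           norm_1_1 (C_mat \<gamma> p n) \<le> 1 + gen_harmonic (p - 1) (1 - \<gamma>) / Gamma \<gamma>
              + 1 / (Gamma \<gamma> * real p powr (1 - \<gamma>) * beta_gp \<gamma> p))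
       \<and> (\<exists>K::real. \<forall>(\<gamma>::real) (n::nat) (p::nat). 0 < \<gamma> \<and> \<gamma> < 1 \<and> 2 \<le> p \<and> p \<le> n \<longrightarrow>
           norm_1_1 (C_mat \<gamma> p n) \<le> K * real p powr \<gamma> / (\<gamma> * (1 - \<gamma>)))"
proof (intro conjI allI impI)
  fix g :: real and n p :: nat
  assume h: "0 < g \<and> g < 1 \<and> 2 \<le> p \<and> p \<le> n"
  show "norm_1_1 (C_mat g p n) \<le> 1 + gen_harmonic (p - 1) (1 - g) / Gamma g
              + 1 / (Gamma g * real p powr (1 - g) * beta_gp g p)"
    using core[of g p n] rhs[of g p] h by linarith
next
  show "\<exists>K::real. \<forall>(\<gamma>::real) (n::nat) (p::nat). 0 < \<gamma> \<and> \<gamma> < 1 \<and> 2 \<le> p \<and> p \<le> n \<longrightarrow>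
           norm_1_1 (C_mat \<gamma> p n) \<le> K * real p powr \<gamma> / (\<gamma> * (1 - \<gamma>))"
  proof (intro exI allI impI)
    fix g :: real and n p :: nat
    assume h: "0 < g \<and> g < 1 \<and> 2 \<le> p \<and> p \<le> n"
    have "real p powr g / (1 - g) \<le> real p powr g / (g * (1 - g))"
      using h by (intro divide_left_mono) (auto simp: mult_le_cancel_right1)
    then show "norm_1_1 (C_mat g p n) \<le> 1 * real p powr g / (g * (1 - g))"
      using core[of g p n] h by simp
  qed
qed

end
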